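(* Let $x\in\{0,1\}^n$ and let $y\in\{0,1\}^n$ have Hamming distance $k$ to $x$, where $1\le k\le cn$. Apply static hypermutation with FCM to $x$. Let $E_y$ be the event that $y$ is evaluated during the hypermutation, and $E_c$ the event that the hypermutation stops earlier (before evaluating the $k$-th string of its sequence) on a constructive mutation. Then $\Pr\{E_y\vee E_c\}\ge \binom{n}{k}^{-1}$. Moreover, if there are no constructive mutations (i.e. no strings that would count as constructive) at Hamming distance smaller than $k$ from $x$, then $\Pr\{E_y\}=\binom{n}{k}^{-1}$.
   Context: Static hypermutation with FCM (stop at first constructive mutation), with constant parameter $0<c\le1$ and mutation potential $M=cn$ (an integer), applied to $x\in\{0,1\}^n$ for a fitness function $f$: distinct bit positions are chosen uniformly at random without replacement and flipped one after another, and after each flip the current string is evaluated; the process stops as soon as the current string is a constructive mutation (a string whose fitness is better than, or in one variant at least as good as, $f(x)$) or after $M$ bits have been flipped. The $i$-th evaluated string thus has Hamming distance $i$ to $x$. *)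

theory Defs
  imports "HOL-Probability.Probability"
begin

definition flip_set :: "bool list \<Rightarrow> nat set \<Rightarrow> bool list" where
  "flip_set x S = map (\<lambda>i. if i \<in> S then \<not> x ! i else x ! i) [0..<length x]"

definition hamming :: "bool list \<Rightarrow> bool list \<Rightarrow> nat" where
  "hamming x y = card {i. i < length x \<and> x ! i \<noteq> y ! i}"

definition constructive :: "(bool list \<Rightarrow> real) \<Rightarrow> bool \<Rightarrow> bool list \<Rightarrow> bool list \<Rightarrow> bool" where
  "constructive f strict x z = (if strict then f z > f x else f z \<ge> f x)"

definition position_seqs :: "nat \<Rightarrow> nat \<Rightarrow> nat list set" where
  "position_seqs n M = {ps. distinct ps \<and> set ps \<subseteq> {..<n} \<and> length ps = M}"

definition hm_seqs :: "nat \<Rightarrow> nat \<Rightarrow> nat list pmf" where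
  "hm_seqs n M = pmf_of_set (position_seqs n M)"

definition hm_string :: "bool list \<Rightarrow> nat list \<Rightarrow> nat \<Rightarrow> bool list" where
  "hm_string x ps i = flip_set x (set (take i ps))"

definition stop_time :: "(bool list \<Rightarrow> bool) \<Rightarrow> bool list \<Rightarrow> nat \<Rightarrow> nat list \<Rightarrow> nat" where
  "stop_time C x M ps =
     (if \<exists>i. 1 \<le> i \<and> i \<le> M \<and> C (hm_string x ps i)
      then LEAST i. 1 \<le> i \<and> i \<le> M \<and> C (hm_string x ps i) else M)"

definition evaluated :: "(bool list \<Rightarrow> bool) \<Rightarrow> bool list \<Rightarrow> nat \<Rightarrow> nat list \<Rightarrow> bool list \<Rightarrow> bool" where
  "evaluated C x M ps z = (\<exists>i. 1 \<le> i \<and> i \<le> stop_time C x M ps \<and> hm_string x ps i = z)"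

definition stops_early :: "(bool list \<Rightarrow> bool) \<Rightarrow> bool list \<Rightarrow> nat \<Rightarrow> nat list \<Rightarrow> nat \<Rightarrow> bool" where
  "stops_early C x M ps k = (stop_time C x M ps < k \<and> C (hm_string x ps (stop_time C x M ps)))"

end

theory Submission
  imports Defs
begin

lemma lists_card_fact:
  assumes "finite A" "m \<le> card A"
  shows "card {xs. length xs = m \<and> distinct xs \<and> set xs \<subseteq> A} * fact (card A - m) = (fact (card A) :: nat)"
proof -
  have "card A - m + 1 = Suc (card A - m)" by simp
  then show ?thesis
    using card_lists_distinct_length_eq[OF assms] fact_eq_fact_times[of "card A - m" "card A"]
    by (simp add: mult.commute)
qed

lemma flip_nth: "i < length x \<Longrightarrow> flip_set x S ! i = (if i \<in> S then \<not> x ! i else x ! i)"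
  by (simp add: flip_set_def)

lemma flip_len[simp]: "length (flip_set x S) = length x"
  by (simp add: flip_set_def)

lemma flip_eq_iff:
  assumes "S \<subseteq> {..<length x}" "length y = length x"
  shows "flip_set x S = y \<longleftrightarrow> S = {i. i < length x \<and> x ! i \<noteq> y ! i}"
proof
  assume h: "flip_set x S = y"
  show "S = {i. i < length x \<and> x ! i \<noteq> y ! i}"
  proof (intro set_eqI iffI)
    fix i assume "i \<in> S"
    then show "i \<in> {i. i < length x \<and> x ! i \<noteq> y ! i}"
      using assms h flip_nth[of i x S] by auto
  next
    fix i assume "i \<in> {i. i < length x \<and> x ! i \<noteq> y ! i}"
    then show "i \<in> S" using h flip_nth[of i x S] by (auto split: if_splits)
  qed
next
  assume h: "S = {i. i < length x \<and> x ! i \<noteq> y ! i}"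
  show "flip_set x S = y"
    by (rule nth_equalityI) (use assms h in \<open>auto simp: flip_nth\<close>)
qed

lemma hamming_flip:
  assumes "S \<subseteq> {..<length x}"
  shows "hamming x (flip_set x S) = card S"
proof -
  have "{i. i < length x \<and> x ! i \<noteq> flip_set x S ! i} = S"
    using assms by (auto simp: flip_nth split: if_splits)
  then show ?thesis by (simp add: hamming_def)
qed



lemma take_set_card:
  assumes "distinct ps" "i \<le> length ps"
  shows "card (set (take i ps)) = i"
  using assms by (simp add: distinct_card)

lemma stop_le: "stop_time C x M ps \<le> M"
proof (cases "\<exists>i. 1 \<le> i \<and> i \<le> M \<and> C (hm_string x ps i)")
  case True
  then obtain j where j: "1 \<le> j \<and> j \<le> M \<and> C (hm_string x ps j)" by blast
  have "(LEAST i. 1 \<le> i \<and> i \<le> M \<and> C (hm_string x ps i)) \<le> j" using j by (rule Least_le)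
  moreover have "stop_time C x M ps = (LEAST i. 1 \<le> i \<and> i \<le> M \<and> C (hm_string x ps i))"
    using True unfolding stop_time_def by (rule if_P)
  ultimately show ?thesis using j by linarith
next
  case False
  then have "stop_time C x M ps = M" unfolding stop_time_def by (rule if_not_P)
  then show ?thesis by simp
qed

lemma stop_ge:
  assumes "\<And>i. 1 \<le> i \<Longrightarrow> i < k \<Longrightarrow> \<not> C (hm_string x ps i)" and "k \<le> M"
  shows "k \<le> stop_time C x M ps"
proof (cases "\<exists>i. 1 \<le> i \<and> i \<le> M \<and> C (hm_string x ps i)")
  case True
  let ?L = "LEAST i. 1 \<le> i \<and> i \<le> M \<and> C (hm_string x ps i)"
  have L: "1 \<le> ?L \<and> ?L \<le> M \<and> C (hm_string x ps ?L)" using True by (metis (mono_tags, lifting) LeastI)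
  then have "\<not> ?L < k" using assms(1) by blast
  moreover have "stop_time C x M ps = ?L"
    using True unfolding stop_time_def by (rule if_P)
  ultimately show ?thesis by linarith
next
  case False
  then have "stop_time C x M ps = M" unfolding stop_time_def by (rule if_not_P)
  then show ?thesis using assms(2) by simp
qed

theorem lemma1:
  fixes n M k :: nat and c :: real and f :: "bool list \<Rightarrow> real" and strict :: bool
    and x y :: "bool list"
  assumes "0 < c" and "c \<le> 1" and "real M = c * real n"
    and "length x = n" and "length y = n"
    and "hamming x y = k" and "1 \<le> k" and "k \<le> M"
  shows "measure_pmf.prob (hm_seqs n M)
           {ps. evaluated (constructive f strict x) x M ps y
                \<or> stops_early (constructive f strict x) x M ps k} \<ge> 1 / real (n choose k)
         \<and> ((\<forall>z. length z = n \<and> 1 \<le> hamming x z \<and> hamming x z < k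
               \<longrightarrow> \<not> constructive f strict x z) \<longrightarrow>
         measure_pmf.prob (hm_seqs n M)
           {ps. evaluated (constructive f strict x) x M ps y} = 1 / real (n choose k))"
proof -
  let ?C = "constructive f strict x"
  define D where "D = {i. i < n \<and> x ! i \<noteq> y ! i}"
  define S where "S = position_seqs n M"
  define AD where "AD = {ps \<in> S. set (take k ps) = D}"
  have Mn: "M \<le> n"
  proof -
    have "c * real n \<le> 1 * real n" using assms(2) by (intro mult_right_mono) auto
    then show ?thesis using assms(3) by simp
  qed
  have cardD: "card D = k" using assms(4,6) by (simp add: D_def hamming_def)
  have Dsub: "D \<subseteq> {..<n}" by (auto simp: D_def)
  have kn: "k \<le> n" using card_mono[OF _ Dsub] cardD by simp
  have S_eq: "S = {xs. length xs = M \<and> distinct xs \<and> set xs \<subseteq> {..<n}}"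
    by (auto simp: S_def position_seqs_def)
  have finS: "finite S" unfolding S_eq
    by (rule finite_subset[OF _ finite_lists_length_eq[of "{..<n}" M]]) auto
  have cS: "card S * fact (n - M) = (fact n :: nat)"
    using lists_card_fact[of "{..<n}" M] Mn by (simp add: S_eq)
  define P where "P = {xs. length xs = k \<and> distinct xs \<and> set xs \<subseteq> D}"
  define Q where "Q = {xs. length xs = M - k \<and> distinct xs \<and> set xs \<subseteq> {..<n} - D}"
  have finD: "finite D" using Dsub finite_subset by blast
  have cP: "card P = fact k"
    using lists_card_fact[OF finD, of k] cardD by (simp add: P_def)
  have cnD: "card ({..<n} - D) = n - k" using Dsub cardD finD by (simp add: card_Diff_subset)
  have cQ: "card Q * fact (n - M) = fact (n - k)"
    using lists_card_fact[of "{..<n} - D" "M - k"] cnD Mn assms(8)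
    by (simp add: Q_def)
  have AD_eq: "AD = (\<lambda>(a, b). a @ b) ` (P \<times> Q)"
  proof (intro set_eqI iffI)
    fix ps assume "ps \<in> AD"
    then have ps: "length ps = M" "distinct ps" "set ps \<subseteq> {..<n}" "set (take k ps) = D"
      unfolding AD_def S_eq by blast+
    have "distinct (take k ps @ drop k ps)" using ps(2) by simp
    then have "set (take k ps) \<inter> set (drop k ps) = {}" by (simp only: distinct_append)
    then have "D \<inter> set (drop k ps) = {}" unfolding ps(4) .
    moreover have "set (drop k ps) \<subseteq> {..<n}" using set_drop_subset[of k ps] ps(3) by (rule order_trans)
    ultimately have "set (drop k ps) \<subseteq> {..<n} - D" by auto
    moreover have "length (drop k ps) = M - k" using ps(1) by simp
    moreover have "distinct (drop k ps)" using ps(2) by simp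
    ultimately have dQ: "drop k ps \<in> Q" unfolding Q_def by simp
    have "length (take k ps) = k" using ps(1) assms(8) by simp
    moreover have "distinct (take k ps)" using ps(2) by simp
    moreover have "set (take k ps) \<subseteq> D" using ps(4) by (rule eq_refl)
    ultimately have "take k ps \<in> P" unfolding P_def by (intro CollectI conjI)
    with dQ show "ps \<in> (\<lambda>(a, b). a @ b) ` (P \<times> Q)"
      by (intro image_eqI[of _ _ "(take k ps, drop k ps)"]) auto
  next
    fix ps assume "ps \<in> (\<lambda>(a, b). a @ b) ` (P \<times> Q)"
    then obtain a b where ab: "ps = a @ b" "a \<in> P" "b \<in> Q" by auto
    have sa: "set a = D"
      using ab(2) card_subset_eq[OF finD, of "set a"] cardD by (auto simp: P_def distinct_card)
    have la: "length a = k" and da: "distinct a" using ab(2) by (auto simp: P_def)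
    have lb: "length b = M - k" and db: "distinct b" and sb: "set b \<subseteq> {..<n} - D"
      using ab(3) by (auto simp: Q_def)
    have "length ps = M" using la lb ab(1) assms(8) by simp
    moreover have "distinct ps"
    proof -
      have "set a \<inter> set b = {}" using sa sb by blast
      then show ?thesis using da db ab(1) by simp
    qed
    moreover have "set ps \<subseteq> {..<n}"
    proof -
      have "set ps = set a \<union> set b" using ab(1) by simp
      then show ?thesis using sa sb Dsub by blast
    qed
    moreover have "set (take k ps) = D" using ab(1) la sa by simp
    ultimately show "ps \<in> AD" unfolding AD_def S_eq by blast
  qed
  have injab: "inj_on (\<lambda>(a, b). a @ b) (P \<times> Q)"
  proof (rule inj_onI)
    fix u v assume u: "u \<in> P \<times> Q" and v: "v \<in> P \<times> Q"
      and e: "(\<lambda>(a, b). a @ b) u = (\<lambda>(a, b). a @ b) v"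
    obtain a b where ab: "u = (a, b)" "length a = k" using u by (auto simp: P_def)
    obtain a' b' where ab': "v = (a', b')" "length a' = k" using v by (auto simp: P_def)
    have "a @ b = a' @ b'" using e ab(1) ab'(1) by simp
    then have "a = a' \<and> b = b'" using ab(2) ab'(2) by (simp add: append_eq_append_conv)
    then show "u = v" using ab(1) ab'(1) by simp
  qed
  have fk: "(0::nat) < fact k" by simp
  have fnk: "(0::nat) < fact (n - k)" by simp
  have finP: "finite P" "finite Q"
  proof -
    show "finite P" using cP fk card_ge_0_finite by metis
    have "card Q \<noteq> 0" using cQ fnk by (metis mult_0 less_irrefl)
    then show "finite Q" using card_ge_0_finite by blast
  qed
  have cAD: "card AD = card P * card Q"
    unfolding AD_eq using card_image[OF injab] card_cartesian_product by simp
  have keyn: "card S = card AD * (n choose k)"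
  proof -
    have "card S * fact (n - M) = fact k * fact (n - k) * (n choose k)"
      using cS binomial_fact_lemma[OF kn] by simp
    also have "\<dots> = card AD * (n choose k) * fact (n - M)"
      using cP cQ cAD by (simp add: algebra_simps flip: cQ)
    finally show ?thesis by simp
  qed
  have ck: "(n choose k) > 0" using kn by simp
  have cSpos: "card S > 0" using cS by (metis fact_nonzero mult_is_0 neq0_conv)
  have probAD: "real (card AD) / real (card S) = 1 / real (n choose k)"
    using keyn ck cSpos by (simp add: field_simps)
  have Sne: "S \<noteq> {}" using cSpos by auto
  have meas: "\<And>E. measure_pmf.prob (hm_seqs n M) E = real (card (S \<inter> E)) / real (card S)"
    unfolding hm_seqs_def S_def[symmetric] using measure_pmf_of_set[OF Sne finS] by simp
  have hs: "\<And>ps i. ps \<in> S \<Longrightarrow> i \<le> M \<Longrightarrow> set (take i ps) \<subseteq> {..<n} \<and> card (set (take i ps)) = i"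
  proof -
    fix ps i assume pS: "ps \<in> S" and iM: "i \<le> M"
    have p: "length ps = M" "distinct ps" "set ps \<subseteq> {..<n}" using pS unfolding S_eq by blast+
    have "set (take i ps) \<subseteq> {..<n}" using set_take_subset[of i ps] p(3) by (rule order_trans)
    moreover have "card (set (take i ps)) = i"
    proof -
      have "distinct (take i ps)" using p(2) by simp
      then have "card (set (take i ps)) = length (take i ps)" by (rule distinct_card)
      then show ?thesis using p(1) iM by simp
    qed
    ultimately show "set (take i ps) \<subseteq> {..<n} \<and> card (set (take i ps)) = i" by blast
  qed
  have hy: "\<And>ps. ps \<in> S \<Longrightarrow> hm_string x ps k = y \<longleftrightarrow> ps \<in> AD"
  proof -
    fix ps assume "ps \<in> S"
    then have "set (take k ps) \<subseteq> {..<length x}" using hs[of ps k] assms(4,8) by auto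
    then have "flip_set x (set (take k ps)) = y \<longleftrightarrow> set (take k ps) = {i. i < length x \<and> x ! i \<noteq> y ! i}"
      using flip_eq_iff[of "set (take k ps)" x y] assms(4,5) by simp
    moreover have "{i. i < length x \<and> x ! i \<noteq> y ! i} = D" using assms(4) by (simp add: D_def)
    moreover have "ps \<in> AD \<longleftrightarrow> set (take k ps) = D" using \<open>ps \<in> S\<close> by (simp add: AD_def)
    ultimately show "hm_string x ps k = y \<longleftrightarrow> ps \<in> AD"
      unfolding hm_string_def by simp
  qed
  have part1: "S \<inter> AD \<subseteq> S \<inter> {ps. evaluated ?C x M ps y \<or> stops_early ?C x M ps k}"
  proof
    fix ps assume a: "ps \<in> S \<inter> AD"
    show "ps \<in> S \<inter> {ps. evaluated ?C x M ps y \<or> stops_early ?C x M ps k}"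
    proof (cases "k \<le> stop_time ?C x M ps")
      case True
      have "hm_string x ps k = y" using hy[of ps] a by blast
      then have "evaluated ?C x M ps y" unfolding evaluated_def using True assms(7) by blast
      then show ?thesis using a by blast
    next
      case False
      define P' where "P' = (\<lambda>i. 1 \<le> i \<and> i \<le> M \<and> ?C (hm_string x ps i))"
      have ex: "\<exists>i. P' i"
      proof (rule ccontr)
        assume h: "\<not> (\<exists>i. P' i)"
        have "stop_time ?C x M ps = M" using h unfolding stop_time_def P'_def by (rule if_not_P)
        then show False using False assms(8) by linarith
      qed
      have st: "stop_time ?C x M ps = (LEAST i. P' i)"
        using ex unfolding P'_def stop_time_def by (rule if_P)
      have "P' (LEAST i. P' i)" using ex by (metis LeastI)
      then have "?C (hm_string x ps (stop_time ?C x M ps))" unfolding st P'_def by blast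
      moreover have "stop_time ?C x M ps < k" using False by linarith
      ultimately have "stops_early ?C x M ps k"
        unfolding stops_early_def by blast
      then show ?thesis using a by blast
    qed
  qed
  have r1: "measure_pmf.prob (hm_seqs n M)
           {ps. evaluated ?C x M ps y \<or> stops_early ?C x M ps k} \<ge> 1 / real (n choose k)"
  proof -
    let ?E = "{ps. evaluated ?C x M ps y \<or> stops_early ?C x M ps k}"
    have "card (S \<inter> AD) \<le> card (S \<inter> ?E)"
      using part1 finS by (intro card_mono) auto
    moreover have "S \<inter> AD = AD" unfolding AD_def by blast
    ultimately have le: "real (card AD) \<le> real (card (S \<inter> ?E))" by simp
    have "1 / real (n choose k) = real (card AD) / real (card S)" using probAD by simp
    also have "\<dots> \<le> real (card (S \<inter> ?E)) / real (card S)"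
      using le by (rule divide_right_mono) simp
    also have "\<dots> = measure_pmf.prob (hm_seqs n M) ?E" using meas by simp
    finally show ?thesis .
  qed
  have r2: "measure_pmf.prob (hm_seqs n M) {ps. evaluated ?C x M ps y} = 1 / real (n choose k)"
    if nc: "\<forall>z. length z = n \<and> 1 \<le> hamming x z \<and> hamming x z < k \<longrightarrow> \<not> ?C z"
  proof -
    have "S \<inter> {ps. evaluated ?C x M ps y} = AD"
    proof (intro set_eqI iffI)
      fix ps assume a: "ps \<in> S \<inter> {ps. evaluated ?C x M ps y}"
      then have "evaluated ?C x M ps y" by blast
      then obtain i where i: "1 \<le> i" "i \<le> stop_time ?C x M ps" "hm_string x ps i = y"
        unfolding evaluated_def by blast
      have "stop_time ?C x M ps \<le> M" by (rule stop_le)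
      then have iM: "i \<le> M" using i by simp
      have pS: "ps \<in> S" using a by blast
      have "set (take i ps) \<subseteq> {..<length x}" "card (set (take i ps)) = i"
        using hs[OF pS iM] assms(4) by auto
      then have "hamming x (hm_string x ps i) = i"
        unfolding hm_string_def using hamming_flip[of "set (take i ps)" x] by simp
      then have "i = k" using i(3) assms(6) by simp
      then show "ps \<in> AD" using hy[OF pS] i(3) by simp
    next
      fix ps assume a: "ps \<in> AD"
      then have pS: "ps \<in> S" unfolding AD_def by blast
      have noC: "\<not> ?C (hm_string x ps i)" if "1 \<le> i" "i < k" for i
      proof -
        have iM: "i \<le> M" using that assms(8) by linarith
        have "set (take i ps) \<subseteq> {..<length x}" "card (set (take i ps)) = i"
          using hs[OF pS iM] assms(4) by auto
        then have "hamming x (hm_string x ps i) = i"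
          unfolding hm_string_def using hamming_flip[of "set (take i ps)" x] by simp
        moreover have "length (hm_string x ps i) = n" using assms(4) by (simp add: hm_string_def)
        ultimately show ?thesis using nc that by simp
      qed
      have "k \<le> stop_time ?C x M ps" using noC assms(8) by (rule stop_ge)
      then show "ps \<in> S \<inter> {ps. evaluated ?C x M ps y}"
      proof -
        have "hm_string x ps k = y" using hy[OF pS] a by simp
        then have "evaluated ?C x M ps y" unfolding evaluated_def using \<open>k \<le> stop_time ?C x M ps\<close> assms(7) by blast
        then show ?thesis using pS by blast
      qed
    qed
    then show ?thesis using probAD unfolding meas by simp
  qed
  show ?thesis using r1 r2 by blast
qed

end
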